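(* Let $0<\theta_m<\theta_M$, $\Theta=(\theta_m,\theta_M)$, $\alpha>0$, $r>0$. Suppose $v(x,t)$ is a smooth function satisfying, at some point $(x_0,t_0)$, $v_t(x_0,t_0)-H(\partial_xv(x_0,t_0))=-a$ for some $a>0$. Set $\lambda=\partial_xv(x_0,t_0)$, let $Q(\theta)>0$ be the normalized eigenfunction associated with $H(\lambda)$ (see context), and define $v^\varepsilon(x,\theta,t)=v(x,t)+\varepsilon\ln Q(\theta)$. Then there exist positive constants $s,\varepsilon_1$ such that for all $(x,t)\in B_s(x_0,t_0)$, all $\theta\in\Theta$ and all $0<\varepsilon\le\varepsilon_1$, $$v^\varepsilon_t-\varepsilon\theta v^\varepsilon_{xx}-\theta(v^\varepsilon_x)^2-\frac{\alpha}{\varepsilon}v^\varepsilon_{\theta\theta}-\frac{\alpha}{\varepsilon^2}(v^\varepsilon_\theta)^2-r\le-\frac a2,$$ where all terms are evaluated at $(x,\theta,t)$.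
   Context: $H:\mathbb{R}\to\mathbb{R}$ and $Q$: for each $\lambda\in\mathbb{R}$, $H(\lambda)$ is the unique real number for which there exists $Q=Q(\cdot,\lambda)>0$ on $\bar\Theta$ with $\int_\Theta Q\,d\theta=1$, $(-H(\lambda)+\theta\lambda^2+r)Q+\alpha Q''=0$ on $\Theta$ and $Q'(\theta_m)=Q'(\theta_M)=0$ (and $Q$ is then unique). *)

theory Defs
  imports "HOL-Analysis.Analysis"
begin

text \<open>Smoothness (C-infinity) of a function of two real variables (x,t) on a set U:
  it is (Frechet) differentiable at every point of U, with partial derivatives
  fx, ft that are again smooth on U (coinductively: derivatives of all orders exist).\<close>
coinductive smooth2_on :: "(real \<times> real) set \<Rightarrow> (real \<Rightarrow> real \<Rightarrow> real) \<Rightarrow> bool" where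
  "(\<forall>p\<in>U. ((\<lambda>(x,t). f x t) has_derivative (\<lambda>(h,k). fx (fst p) (snd p) * h + ft (fst p) (snd p) * k)) (at p))
   \<Longrightarrow> smooth2_on U fx \<Longrightarrow> smooth2_on U ft \<Longrightarrow> smooth2_on U f"

definition eigpair :: "real \<Rightarrow> real \<Rightarrow> real \<Rightarrow> real \<Rightarrow> real \<Rightarrow> real \<Rightarrow> (real \<Rightarrow> real) \<Rightarrow> bool" where
  "eigpair \<theta>\<^sub>m \<theta>\<^sub>M \<alpha> r lam h Q \<longleftrightarrow>
     (\<forall>\<theta>\<in>{\<theta>\<^sub>m..\<theta>\<^sub>M}. 0 < Q \<theta>) \<and> integral {\<theta>\<^sub>m..\<theta>\<^sub>M} Q = 1 \<and>
     (\<exists>Q1 Q2. (\<forall>\<theta>\<in>{\<theta>\<^sub>m..\<theta>\<^sub>M}. (Q has_real_derivative Q1 \<theta>) (at \<theta> within {\<theta>\<^sub>m..\<theta>\<^sub>M})) \<and>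
              (\<forall>\<theta>\<in>{\<theta>\<^sub>m<..<\<theta>\<^sub>M}. (Q1 has_real_derivative Q2 \<theta>) (at \<theta>)) \<and>
              (\<forall>\<theta>\<in>{\<theta>\<^sub>m<..<\<theta>\<^sub>M}. (- h + \<theta> * lam\<^sup>2 + r) * Q \<theta> + \<alpha> * Q2 \<theta> = 0) \<and>
              Q1 \<theta>\<^sub>m = 0 \<and> Q1 \<theta>\<^sub>M = 0)"

end

theory Submission
  imports Defs
begin



lemma partial_x:
  assumes "((\<lambda>(x,t). f x t) has_derivative (\<lambda>(h,k). A*h + B*k)) (at (x,t))"
  shows "((\<lambda>x'. f x' t) has_real_derivative A) (at x)"
proof -
  have 1: "((\<lambda>x'. (x',t)) has_derivative (\<lambda>h. (h,0))) (at x)"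
    by (auto intro!: derivative_eq_intros)
  show ?thesis using has_derivative_compose[OF 1 assms] by (simp add: has_field_derivative_def o_def mult_commute_abs)
qed
lemma partial_t:
  assumes "((\<lambda>(x,t). f x t) has_derivative (\<lambda>(h,k). A*h + B*k)) (at (x,t))"
  shows "((\<lambda>t'. f x t') has_real_derivative B) (at t)"
proof -
  have 1: "((\<lambda>t'. (x,t')) has_derivative (\<lambda>h. (0,h))) (at t)"
    by (auto intro!: derivative_eq_intros)
  show ?thesis using has_derivative_compose[OF 1 assms] by (simp add: has_field_derivative_def o_def mult_commute_abs)
qed
lemma ev_x: fixes x t :: real assumes "open U" "(x,t) \<in> U" shows "eventually (\<lambda>x'. (x',t) \<in> U) (nhds x)"
proof -
  obtain e where e: "e>0" "ball (x,t) e \<subseteq> U" using assms open_contains_ball by blast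
  show ?thesis unfolding eventually_nhds_metric
    using e by (intro exI[of _ e]) (auto simp: dist_Pair_Pair dist_commute subset_iff)
qed

lemma cont_eps: fixes f :: "real \<Rightarrow> real \<Rightarrow> real" and e :: real
  assumes "((\<lambda>(x,t). f x t) has_derivative D) (at (x0::real,t0::real))" "e > 0"
  shows "\<exists>d>0. \<forall>x t. dist (x,t) (x0,t0) < d \<longrightarrow> \<bar>f x t - f x0 t0\<bar> < e"
proof -
  have "continuous (at (x0,t0)) (\<lambda>(x,t). f x t)" using has_derivative_continuous[OF assms(1)] .
  then obtain d where "d>0" "\<forall>p. dist p (x0,t0) < d \<longrightarrow> dist ((\<lambda>(x,t). f x t) p) ((\<lambda>(x,t). f x t) (x0,t0)) < e"
    using assms(2) unfolding continuous_at_eps_delta by blast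
  then show ?thesis by (intro exI[of _ d]) (auto simp: dist_real_def)
qed

lemma cont_eps_sq: fixes f :: "real \<Rightarrow> real \<Rightarrow> real" and e :: real
  assumes "((\<lambda>(x,t). f x t) has_derivative D) (at (x0::real,t0::real))" "e > 0"
  shows "\<exists>d>0. \<forall>x t. dist (x,t) (x0,t0) < d \<longrightarrow> \<bar>(f x t)\<^sup>2 - (f x0 t0)\<^sup>2\<bar> < e"
proof -
  have "continuous (at (x0,t0)) (\<lambda>(x,t). f x t)" using has_derivative_continuous[OF assms(1)] .
  then have "continuous (at (x0,t0)) (\<lambda>p. ((\<lambda>(x,t). f x t) p)^2)" by (rule continuous_power)
  then obtain d where "d>0" "\<forall>p. dist p (x0,t0) < d \<longrightarrow> dist (((\<lambda>(x,t). f x t) p)^2) (((\<lambda>(x,t). f x t) (x0,t0))^2) < e"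
    using assms(2) unfolding continuous_at_eps_delta by blast
  then show ?thesis by (intro exI[of _ d]) (auto simp: dist_real_def)
qed



theorem lemma4p3:
  fixes \<theta>\<^sub>m \<theta>\<^sub>M \<alpha> r a x0 t0 :: real
    and H :: "real \<Rightarrow> real" and Q :: "real \<Rightarrow> real"
    and v :: "real \<Rightarrow> real \<Rightarrow> real" and U :: "(real \<times> real) set"
  assumes "0 < \<theta>\<^sub>m" and "\<theta>\<^sub>m < \<theta>\<^sub>M" and "0 < \<alpha>" and "0 < r"
    and H_def: "\<forall>lam. (\<exists>Q'. eigpair \<theta>\<^sub>m \<theta>\<^sub>M \<alpha> r lam (H lam) Q') \<and>
                      (\<forall>h Q'. eigpair \<theta>\<^sub>m \<theta>\<^sub>M \<alpha> r lam h Q' \<longrightarrow> h = H lam)"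
    and "open U" and "(x0, t0) \<in> U" and "smooth2_on U v"
    and "0 < a"
    and "deriv (\<lambda>t. v x0 t) t0 - H (deriv (\<lambda>x. v x t0) x0) = - a"
    and "eigpair \<theta>\<^sub>m \<theta>\<^sub>M \<alpha> r (deriv (\<lambda>x. v x t0) x0) (H (deriv (\<lambda>x. v x t0) x0)) Q"
  shows "\<exists>s>0. \<exists>\<epsilon>1>0. \<forall>x t \<theta> \<epsilon>.
           (x, t) \<in> ball (x0, t0) s \<longrightarrow> \<theta> \<in> {\<theta>\<^sub>m<..<\<theta>\<^sub>M} \<longrightarrow> 0 < \<epsilon> \<longrightarrow> \<epsilon> \<le> \<epsilon>1 \<longrightarrow>
           (let ve = (\<lambda>x \<theta> t. v x t + \<epsilon> * ln (Q \<theta>)) in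
              deriv (\<lambda>t'. ve x \<theta> t') t
              - \<epsilon> * \<theta> * deriv (\<lambda>x'. deriv (\<lambda>x''. ve x'' \<theta> t) x') x
              - \<theta> * (deriv (\<lambda>x'. ve x' \<theta> t) x)\<^sup>2
              - \<alpha> / \<epsilon> * deriv (\<lambda>\<theta>'. deriv (\<lambda>\<theta>''. ve x \<theta>'' t) \<theta>') \<theta>
              - \<alpha> / \<epsilon>\<^sup>2 * (deriv (\<lambda>\<theta>'. ve x \<theta>' t) \<theta>)\<^sup>2
              - r \<le> - a / 2)"
  proof -
  note as = assms
  obtain fx ft where Dv: "\<forall>p\<in>U. ((\<lambda>(x,t). v x t) has_derivative (\<lambda>(h,k). fx (fst p) (snd p) * h + ft (fst p) (snd p) * k)) (at p)"
    and Sx: "smooth2_on U fx" and St: "smooth2_on U ft"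
    using assms(8) by (auto elim: smooth2_on.cases)
  obtain fxx fxt where Dx: "\<forall>p\<in>U. ((\<lambda>(x,t). fx x t) has_derivative (\<lambda>(h,k). fxx (fst p) (snd p) * h + fxt (fst p) (snd p) * k)) (at p)"
    and Sxx: "smooth2_on U fxx"
    using Sx by (auto elim: smooth2_on.cases)
  obtain f3 f4 where Dxx: "\<forall>p\<in>U. ((\<lambda>(x,t). fxx x t) has_derivative (\<lambda>(h,k). f3 (fst p) (snd p) * h + f4 (fst p) (snd p) * k)) (at p)"
    using Sxx by (auto elim: smooth2_on.cases)
  obtain ftx ftt where Dt: "\<forall>p\<in>U. ((\<lambda>(x,t). ft x t) has_derivative (\<lambda>(h,k). ftx (fst p) (snd p) * h + ftt (fst p) (snd p) * k)) (at p)"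
    using St by (auto elim: smooth2_on.cases)
  have dvx: "((\<lambda>x'. v x' t) has_real_derivative fx x t) (at x)" if "(x,t)\<in>U" for x t
    using partial_x[of v "fx x t" "ft x t" x t] Dv that by auto
  have dvt: "((\<lambda>t'. v x t') has_real_derivative ft x t) (at t)" if "(x,t)\<in>U" for x t
    using partial_t[of v "fx x t" "ft x t" x t] Dv that by auto
  have dfx: "((\<lambda>x'. fx x' t) has_real_derivative fxx x t) (at x)" if "(x,t)\<in>U" for x t
    using partial_x[of fx "fxx x t" "fxt x t" x t] Dx that by auto
  have Lam: "deriv (\<lambda>x. v x t0) x0 = fx x0 t0" using dvx[OF as(7)] by (rule DERIV_imp_deriv)
  have ft0: "deriv (\<lambda>t. v x0 t) t0 = ft x0 t0" using dvt[OF as(7)] by (rule DERIV_imp_deriv)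
  define h where "h = H (fx x0 t0)"
  have aeq: "ft x0 t0 - h = - a" using as(10) Lam ft0 h_def by simp
  obtain Q1 Q2 where Qpos: "\<forall>\<theta>\<in>{\<theta>\<^sub>m..\<theta>\<^sub>M}. 0 < Q \<theta>"
    and dQw: "\<forall>\<theta>\<in>{\<theta>\<^sub>m..\<theta>\<^sub>M}. (Q has_real_derivative Q1 \<theta>) (at \<theta> within {\<theta>\<^sub>m..\<theta>\<^sub>M})"
    and dQ1: "\<forall>\<theta>\<in>{\<theta>\<^sub>m<..<\<theta>\<^sub>M}. (Q1 has_real_derivative Q2 \<theta>) (at \<theta>)"
    and Qeq: "\<forall>\<theta>\<in>{\<theta>\<^sub>m<..<\<theta>\<^sub>M}. (- h + \<theta> * (fx x0 t0)\<^sup>2 + r) * Q \<theta> + \<alpha> * Q2 \<theta> = 0"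
    using as(11) unfolding eigpair_def Lam h_def by blast
  have dQ: "(Q has_real_derivative Q1 \<theta>) (at \<theta>)" if "\<theta>\<in>{\<theta>\<^sub>m<..<\<theta>\<^sub>M}" for \<theta>
  proof -
    have "at \<theta> within {\<theta>\<^sub>m..\<theta>\<^sub>M} = at \<theta>" using that by (intro at_within_interior) simp
    moreover have "(Q has_real_derivative Q1 \<theta>) (at \<theta> within {\<theta>\<^sub>m..\<theta>\<^sub>M})" using dQw that by auto
    ultimately show ?thesis by simp
  qed
  have Qp: "0 < Q \<theta>" if "\<theta>\<in>{\<theta>\<^sub>m<..<\<theta>\<^sub>M}" for \<theta> using Qpos that by auto
  define M where "M = \<bar>fxx x0 t0\<bar> + 1"
  have Mpos: "M > 0" unfolding M_def by simp
  have thMpos: "\<theta>\<^sub>M > 0" using as(1,2) by simp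
  obtain d0 where d0: "d0 > 0" "ball (x0,t0) d0 \<subseteq> U" using as(6,7) open_contains_ball by blast
  obtain d1 where d1: "d1 > 0" "\<forall>x t. dist (x,t) (x0,t0) < d1 \<longrightarrow> \<bar>ft x t - ft x0 t0\<bar> < a/4"
    using cont_eps[OF Dt[rule_format, OF as(7)], of "a/4"] as(9) by auto
  obtain d2 where d2: "d2 > 0" "\<forall>x t. dist (x,t) (x0,t0) < d2 \<longrightarrow> \<bar>(fx x t)\<^sup>2 - (fx x0 t0)\<^sup>2\<bar> < a/(8*\<theta>\<^sub>M)"
    using cont_eps_sq[OF Dx[rule_format, OF as(7)], of "a/(8*\<theta>\<^sub>M)"] as(9) thMpos by auto
  obtain d3 where d3: "d3 > 0" "\<forall>x t. dist (x,t) (x0,t0) < d3 \<longrightarrow> \<bar>fxx x t - fxx x0 t0\<bar> < 1"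
    using cont_eps[OF Dxx[rule_format, OF as(7)], of 1] by auto
  define s where "s = min d0 (min d1 (min d2 d3))"
  define e1 where "e1 = a / (8 * \<theta>\<^sub>M * M)"
  have spos: "s > 0" unfolding s_def using d0 d1 d2 d3 by simp
  have e1pos: "e1 > 0" unfolding e1_def using as(9) thMpos Mpos by simp
  have main: "\<forall>x t \<theta> \<epsilon>.
           (x, t) \<in> ball (x0, t0) s \<longrightarrow> \<theta> \<in> {\<theta>\<^sub>m<..<\<theta>\<^sub>M} \<longrightarrow> 0 < \<epsilon> \<longrightarrow> \<epsilon> \<le> e1 \<longrightarrow>
           (let ve = (\<lambda>x \<theta> t. v x t + \<epsilon> * ln (Q \<theta>)) in
              deriv (\<lambda>t'. ve x \<theta> t') t
              - \<epsilon> * \<theta> * deriv (\<lambda>x'. deriv (\<lambda>x''. ve x'' \<theta> t) x') x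
              - \<theta> * (deriv (\<lambda>x'. ve x' \<theta> t) x)\<^sup>2
              - \<alpha> / \<epsilon> * deriv (\<lambda>\<theta>'. deriv (\<lambda>\<theta>''. ve x \<theta>'' t) \<theta>') \<theta>
              - \<alpha> / \<epsilon>\<^sup>2 * (deriv (\<lambda>\<theta>'. ve x \<theta>' t) \<theta>)\<^sup>2
              - r \<le> - a / 2)"
  proof (intro allI impI)
    fix x t \<theta> \<epsilon> :: real
    assume xt: "(x, t) \<in> ball (x0, t0) s" and th: "\<theta> \<in> {\<theta>\<^sub>m<..<\<theta>\<^sub>M}" and ep: "0 < \<epsilon>" "\<epsilon> \<le> e1"
    have dist: "dist (x,t) (x0,t0) < s" using xt by (simp add: dist_commute)
    have xtU: "(x,t) \<in> U" using xt d0 unfolding s_def by auto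
    define c where "c = \<epsilon> * ln (Q \<theta>)"
    have E1: "deriv (\<lambda>t'. v x t' + c) t = ft x t"
      by (rule DERIV_imp_deriv) (use DERIV_add[OF dvt[OF xtU] DERIV_const[of c]] in simp)
    have E3: "deriv (\<lambda>x'. v x' t + c) x' = fx x' t" if "(x',t) \<in> U" for x'
      by (rule DERIV_imp_deriv) (use DERIV_add[OF dvx[OF that] DERIV_const[of c]] in simp)
    have ev: "eventually (\<lambda>x'. deriv (\<lambda>x''. v x'' t + c) x' = fx x' t) (nhds x)"
      using ev_x[OF as(6) xtU] by eventually_elim (use E3 in auto)
    have E2: "deriv (\<lambda>x'. deriv (\<lambda>x''. v x'' t + c) x') x = fxx x t"
      by (rule DERIV_imp_deriv) (use DERIV_cong_ev[OF refl ev refl] dfx[OF xtU] in simp)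
    have E4: "deriv (\<lambda>\<theta>''. v x t + \<epsilon> * ln (Q \<theta>'')) \<theta>' = \<epsilon> * (Q1 \<theta>' / Q \<theta>')" if "\<theta>' \<in> {\<theta>\<^sub>m<..<\<theta>\<^sub>M}" for \<theta>'
      by (rule DERIV_imp_deriv) (use Qp[OF that] dQ[OF that] in \<open>auto intro!: derivative_eq_intros simp: field_simps\<close>)
    have ev2: "eventually (\<lambda>\<theta>'. deriv (\<lambda>\<theta>''. v x t + \<epsilon> * ln (Q \<theta>'')) \<theta>' = \<epsilon> * (Q1 \<theta>' / Q \<theta>')) (nhds \<theta>)"
      using eventually_nhds_in_open[OF open_greaterThanLessThan th] by eventually_elim (use E4 in auto)
    have dd: "((\<lambda>\<theta>'. \<epsilon> * (Q1 \<theta>' / Q \<theta>')) has_real_derivative \<epsilon> * ((Q2 \<theta> * Q \<theta> - Q1 \<theta> * Q1 \<theta>) / (Q \<theta>)\<^sup>2)) (at \<theta>)"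
      using Qp[OF th] dQ[OF th] dQ1 th by (auto intro!: derivative_eq_intros simp: field_simps power2_eq_square)
    have E5: "deriv (\<lambda>\<theta>'. deriv (\<lambda>\<theta>''. v x t + \<epsilon> * ln (Q \<theta>'')) \<theta>') \<theta> = \<epsilon> * ((Q2 \<theta> * Q \<theta> - Q1 \<theta> * Q1 \<theta>) / (Q \<theta>)\<^sup>2)"
      by (rule DERIV_imp_deriv) (use DERIV_cong_ev[OF refl ev2 refl] dd in simp)
    have E6: "deriv (\<lambda>\<theta>'. v x t + \<epsilon> * ln (Q \<theta>')) \<theta> = \<epsilon> * (Q1 \<theta> / Q \<theta>)" using E4[OF th] .
    have key: "\<alpha> * Q2 \<theta> / Q \<theta> = h - \<theta> * (fx x0 t0)\<^sup>2 - r"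
    proof -
      have q: "(- h + \<theta> * (fx x0 t0)\<^sup>2 + r) * Q \<theta> + \<alpha> * Q2 \<theta> = 0" using Qeq th by blast
      have "\<alpha> * Q2 \<theta> = (h - \<theta> * (fx x0 t0)\<^sup>2 - r) * Q \<theta>" using q by (simp add: algebra_simps)
      then show ?thesis using Qp[OF th] by simp
    qed
    have alg: "ft x t - \<epsilon> * \<theta> * fxx x t - \<theta> * (fx x t)\<^sup>2
          - \<alpha> / \<epsilon> * (\<epsilon> * ((Q2 \<theta> * Q \<theta> - Q1 \<theta> * Q1 \<theta>) / (Q \<theta>)\<^sup>2))
          - \<alpha> / \<epsilon>\<^sup>2 * (\<epsilon> * (Q1 \<theta> / Q \<theta>))\<^sup>2 - r
        = (ft x t - h) - \<epsilon> * \<theta> * fxx x t - \<theta> * ((fx x t)\<^sup>2 - (fx x0 t0)\<^sup>2)"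
    proof -
      have "\<alpha> / \<epsilon> * (\<epsilon> * ((Q2 \<theta> * Q \<theta> - Q1 \<theta> * Q1 \<theta>) / (Q \<theta>)\<^sup>2))
          + \<alpha> / \<epsilon>\<^sup>2 * (\<epsilon> * (Q1 \<theta> / Q \<theta>))\<^sup>2 = \<alpha> * Q2 \<theta> / Q \<theta>"
        using ep Qp[OF th] by (simp add: field_simps power2_eq_square)
      then show ?thesis using key by (simp add: algebra_simps)
    qed
    have ds: "dist (x,t) (x0,t0) < d1" "dist (x,t) (x0,t0) < d2" "dist (x,t) (x0,t0) < d3"
      using dist unfolding s_def by auto
    have c1: "\<bar>ft x t - ft x0 t0\<bar> < a/4" using d1(2) ds(1) by blast
    have c2: "\<bar>fxx x t - fxx x0 t0\<bar> < 1" using d3(2) ds(3) by blast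
    have c3: "\<bar>(fx x t)\<^sup>2 - (fx x0 t0)\<^sup>2\<bar> < a/(8*\<theta>\<^sub>M)" using d2(2) ds(2) by blast
    have b1: "ft x t - h < - a + a/4" using c1 aeq by linarith
    have b2: "\<bar>fxx x t\<bar> \<le> M" using c2 unfolding M_def by linarith
    have b3: "\<bar>(fx x t)\<^sup>2 - (fx x0 t0)\<^sup>2\<bar> \<le> a/(8*\<theta>\<^sub>M)" using c3 by linarith
    have thpos: "0 < \<theta>" "\<theta> \<le> \<theta>\<^sub>M" using th as(1) by auto
    have b4: "\<epsilon> * \<theta> * \<bar>fxx x t\<bar> \<le> a/8"
    proof -
      have "\<epsilon> * \<theta> * \<bar>fxx x t\<bar> \<le> e1 * \<theta>\<^sub>M * M"
        using ep thpos b2 by (intro mult_mono) auto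
      also have "\<dots> = a/8" unfolding e1_def using thMpos Mpos by (simp add: field_simps)
      finally show ?thesis .
    qed
    have b5: "\<theta> * \<bar>(fx x t)\<^sup>2 - (fx x0 t0)\<^sup>2\<bar> \<le> a/8"
    proof -
      have "\<theta> * \<bar>(fx x t)\<^sup>2 - (fx x0 t0)\<^sup>2\<bar> \<le> \<theta>\<^sub>M * (a/(8*\<theta>\<^sub>M))"
        using thpos b3 as(9) by (intro mult_mono) auto
      also have "\<dots> = a/8" using thMpos by simp
      finally show ?thesis .
    qed
    have a6: "\<bar>\<epsilon> * \<theta> * fxx x t\<bar> = \<epsilon> * \<theta> * \<bar>fxx x t\<bar>" using ep thpos by (simp add: abs_mult)
    have b6: "- (\<epsilon> * \<theta> * fxx x t) \<le> a/8" using b4 a6 abs_ge_minus_self[of "\<epsilon> * \<theta> * fxx x t"] by linarith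
    have a7: "\<bar>\<theta> * ((fx x t)\<^sup>2 - (fx x0 t0)\<^sup>2)\<bar> = \<theta> * \<bar>(fx x t)\<^sup>2 - (fx x0 t0)\<^sup>2\<bar>" using thpos by (simp add: abs_mult)
    have b7: "- (\<theta> * ((fx x t)\<^sup>2 - (fx x0 t0)\<^sup>2)) \<le> a/8" using b5 a7 abs_ge_minus_self[of "\<theta> * ((fx x t)\<^sup>2 - (fx x0 t0)\<^sup>2)"] by linarith
    show "let ve = (\<lambda>x \<theta> t. v x t + \<epsilon> * ln (Q \<theta>)) in
              deriv (\<lambda>t'. ve x \<theta> t') t
              - \<epsilon> * \<theta> * deriv (\<lambda>x'. deriv (\<lambda>x''. ve x'' \<theta> t) x') x
              - \<theta> * (deriv (\<lambda>x'. ve x' \<theta> t) x)\<^sup>2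
              - \<alpha> / \<epsilon> * deriv (\<lambda>\<theta>'. deriv (\<lambda>\<theta>''. ve x \<theta>'' t) \<theta>') \<theta>
              - \<alpha> / \<epsilon>\<^sup>2 * (deriv (\<lambda>\<theta>'. ve x \<theta>' t) \<theta>)\<^sup>2
              - r \<le> - a / 2"
      unfolding Let_def c_def[symmetric] E1 E2 E3[OF xtU] E5 E6 alg using b1 b6 b7 by linarith
  qed
  show ?thesis using spos e1pos main by blast
qed

end
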